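(* Let $\alpha\in(\tfrac12,1)$, $0<\eta_0<\frac1{2\lambda_\Sigma}$, $\eta_t=\eta_0t^{-\alpha}$. For every positive definite $Y\in\mathbb R^{d\times d}$, letting $X\succeq0$ be the solution of $\eta_0(AX+XA^\top)=Y$, one has $$T^{-\alpha}\sum_{t=1}^T\Big(\prod_{k=t}^T(I-\eta_kA)\Big)Y\Big(\prod_{k=t}^T(I-\eta_kA)\Big)^\top-X=O(T^{\alpha-1})\,Y,$$ in the matrix big-$O$ sense.
   Context: $\mathcal S$ is a finite state space, $\gamma\in[0,1)$, $P(\cdot\mid s)$ a Markov transition kernel on $\mathcal S$ with stationary distribution $\mu$, and $\phi:\mathcal S\to\mathbb R^d$ a feature map with $\|\phi(s)\|_2\le1$. $A=\mathbb E_{s\sim\mu,s'\sim P(\cdot\mid s)}[\phi(s)(\phi(s)-\gamma\phi(s'))^\top]$, $\Sigma=\mathbb E_{s\sim\mu}[\phi(s)\phi(s)^\top]$, $\lambda_0=\lambda_{\min}(\Sigma)>0$, $\lambda_\Sigma=\lambda_{\max}(\Sigma)$. Matrix big-$O$ notation: for matrices $F_T$, a scalar sequence $f_T$ and a fixed positive semidefinite matrix $M$, $F_T=O(f_T)M$ means there is a constant $\tilde C$ independent of $T$ and $M$ with $\|F_T\|\le\tilde Cf_T\|M\|$ and $\mathrm{Tr}(F_T)\le\tilde Cf_T\mathrm{Tr}(M)$ for all $T$ ($\|\cdot\|$ the spectral norm). *)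

theory Defs
  imports "HOL-Analysis.Analysis"
begin

type_synonym 'd mat = "real^'d^'d"

definition outer :: "real^'d \<Rightarrow> real^'d \<Rightarrow> ('d::finite) mat" where
  "outer u v = (\<chi> i j. u $ i * v $ j)"

definition eigenvalues :: "('d::finite) mat \<Rightarrow> real set" where
  "eigenvalues M = {l. \<exists>v. v \<noteq> 0 \<and> M *v v = l *\<^sub>R v}"

definition lambda_min :: "('d::finite) mat \<Rightarrow> real" where
  "lambda_min M = Min (eigenvalues M)"

definition lambda_max :: "('d::finite) mat \<Rightarrow> real" where
  "lambda_max M = Max (eigenvalues M)"

definition spec_norm :: "('d::finite) mat \<Rightarrow> real" where
  "spec_norm M = onorm (\<lambda>x. M *v x)"

definition pos_semidef :: "('d::finite) mat \<Rightarrow> bool" where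
  "pos_semidef M \<longleftrightarrow> transpose M = M \<and> (\<forall>x. 0 \<le> x \<bullet> (M *v x))"

definition pos_def :: "('d::finite) mat \<Rightarrow> bool" where
  "pos_def M \<longleftrightarrow> transpose M = M \<and> (\<forall>x. x \<noteq> 0 \<longrightarrow> 0 < x \<bullet> (M *v x))"

text \<open>Ordered product  M t ** M (t+1) ** ... ** M T  (identity if t > T).\<close>
definition mat_prod_range :: "(nat \<Rightarrow> ('d::finite) mat) \<Rightarrow> nat \<Rightarrow> nat \<Rightarrow> ('d::finite) mat" where
  "mat_prod_range M t T = foldr (\<lambda>k N. M k ** N) [t..<Suc T] (mat 1)"

definition markov_kernel :: "('s::finite \<Rightarrow> 's \<Rightarrow> real) \<Rightarrow> bool" where
  "markov_kernel P \<longleftrightarrow> (\<forall>s s'. 0 \<le> P s s') \<and> (\<forall>s. (\<Sum>s'\<in>UNIV. P s s') = 1)"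

definition stationary_dist :: "('s::finite \<Rightarrow> 's \<Rightarrow> real) \<Rightarrow> ('s \<Rightarrow> real) \<Rightarrow> bool" where
  "stationary_dist P \<mu> \<longleftrightarrow> (\<forall>s. 0 \<le> \<mu> s) \<and> (\<Sum>s\<in>UNIV. \<mu> s) = 1
     \<and> (\<forall>s'. (\<Sum>s\<in>UNIV. \<mu> s * P s s') = \<mu> s')"

definition TD_A :: "('s::finite \<Rightarrow> 's \<Rightarrow> real) \<Rightarrow> ('s \<Rightarrow> real) \<Rightarrow> real \<Rightarrow> ('s \<Rightarrow> real^('d::finite)) \<Rightarrow> ('d::finite) mat" where
  "TD_A P \<mu> \<gamma> \<phi> = (\<Sum>s\<in>UNIV. \<Sum>s'\<in>UNIV. (\<mu> s * P s s') *\<^sub>R outer (\<phi> s) (\<phi> s - \<gamma> *\<^sub>R \<phi> s'))"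

definition TD_Sigma :: "('s::finite \<Rightarrow> real) \<Rightarrow> ('s \<Rightarrow> real^('d::finite)) \<Rightarrow> ('d::finite) mat" where
  "TD_Sigma \<mu> \<phi> = (\<Sum>s\<in>UNIV. \<mu> s *\<^sub>R outer (\<phi> s) (\<phi> s))"

end

theory Submission
  imports Defs
begin

lemma sn_app: "norm (M *v x) \<le> spec_norm M * norm x"
  unfolding spec_norm_def by (rule onorm) (rule matrix_vector_mul_bounded_linear)

lemma sn_le: assumes "\<And>x. norm (M *v x) \<le> c * norm x" shows "spec_norm M \<le> c"
  unfolding spec_norm_def by (rule onorm_le) (rule assms)

lemma sn_nonneg: "0 \<le> spec_norm M"
  unfolding spec_norm_def by (rule onorm_pos_le) (rule matrix_vector_mul_bounded_linear)

lemma sn_add: "spec_norm (A + B) \<le> spec_norm A + spec_norm B"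
proof (rule sn_le)
  fix x
  have "norm ((A + B) *v x) \<le> norm (A *v x) + norm (B *v x)"
    by (simp add: matrix_vector_mult_add_rdistrib norm_triangle_ineq)
  also have "\<dots> \<le> spec_norm A * norm x + spec_norm B * norm x"
    using sn_app add_mono by blast
  finally show "norm ((A + B) *v x) \<le> (spec_norm A + spec_norm B) * norm x"
    by (simp add: algebra_simps)
qed

lemma sn_neg: "spec_norm (- A) = spec_norm A"
proof -
  have "(\<lambda>x. (- A) *v x) = (\<lambda>x. - (A *v x))"
    by (rule ext) (simp add: vec_eq_iff matrix_vector_mult_def sum_negf)
  then show ?thesis unfolding spec_norm_def by (simp add: onorm_neg)
qed

lemma sn_diff: "spec_norm (A - B) \<le> spec_norm A + spec_norm B"
  using sn_add[of A "- B"] by (simp add: sn_neg)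

lemma sn_scale: "spec_norm (c *\<^sub>R A) \<le> \<bar>c\<bar> * spec_norm A"
proof (rule sn_le)
  fix x
  have "norm ((c *\<^sub>R A) *v x) = \<bar>c\<bar> * norm (A *v x)"
    by (simp add: scaleR_matrix_vector_assoc[symmetric])
  also have "\<dots> \<le> \<bar>c\<bar> * (spec_norm A * norm x)"
    by (simp add: mult_left_mono sn_app)
  finally show "norm ((c *\<^sub>R A) *v x) \<le> \<bar>c\<bar> * spec_norm A * norm x" by simp
qed

lemma sn_mul: "spec_norm (A ** B) \<le> spec_norm A * spec_norm B"
proof (rule sn_le)
  fix x
  have "norm ((A ** B) *v x) = norm (A *v (B *v x))"
    by (simp add: matrix_vector_mul_assoc)
  also have "\<dots> \<le> spec_norm A * norm (B *v x)" by (rule sn_app)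
  also have "\<dots> \<le> spec_norm A * (spec_norm B * norm x)"
    by (simp add: mult_left_mono sn_app sn_nonneg)
  finally show "norm ((A ** B) *v x) \<le> spec_norm A * spec_norm B * norm x" by simp
qed

lemma inner_transpose: "x \<bullet> (transpose M *v y) = (M *v x) \<bullet> (y::real^'n)"
  by (simp add: dot_lmul_matrix[symmetric] inner_commute)

lemma axis_mat: "axis i 1 \<bullet> (M *v axis j (1::real)) = M $ i $ j"
proof -
  have "M *v axis j 1 = (\<chi> k. M $ k $ j)"
    by (simp add: matrix_vector_mult_def axis_def vec_eq_iff if_distrib sum.If_cases cong: if_cong)
  then show ?thesis by (simp add: inner_axis')
qed

lemma sym_entry: "transpose P = P \<Longrightarrow> P $ i $ j = P $ j $ i"
  by (metis transpose_def vec_lambda_beta)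

lemma quad_add: "(u + v) \<bullet> (P *v (u + v)) = u \<bullet> (P *v u) + u \<bullet> (P *v v) + v \<bullet> (P *v u) + v \<bullet> (P *v (v::real^'n))"
  by (simp add: matrix_vector_right_distrib inner_add_left inner_add_right)

lemma quad_diff: "(u - v) \<bullet> (P *v (u - v)) = u \<bullet> (P *v u) - u \<bullet> (P *v v) - v \<bullet> (P *v u) + v \<bullet> (P *v (v::real^'n))"
  by (simp add: matrix_vector_mult_diff_distrib inner_diff_left inner_diff_right)

lemma psd_entry:
  fixes P :: "real^'n^'n"
  assumes sym: "transpose P = P" and psd: "\<And>x. 0 \<le> x \<bullet> (P *v x)"
  shows "0 \<le> P $ i $ i" "\<bar>P $ i $ j\<bar> \<le> (P $ i $ i + P $ j $ j) / 2"
proof -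
  show "0 \<le> P $ i $ i" using psd[of "axis i 1"] by (simp add: axis_mat)
  have s: "P $ j $ i = P $ i $ j" using sym_entry[OF sym] by simp
  have "0 \<le> (axis i 1 + axis j 1) \<bullet> (P *v (axis i 1 + axis j 1))" by (rule psd)
  then have a: "0 \<le> P$i$i + 2 * P$i$j + P$j$j" unfolding quad_add axis_mat s by simp
  have "0 \<le> (axis i 1 - axis j 1) \<bullet> (P *v (axis i 1 - axis j 1))" by (rule psd)
  then have b: "0 \<le> P$i$i - 2 * P$i$j + P$j$j" unfolding quad_diff axis_mat s by simp
  have c: "P $ i $ j \<le> (P $ i $ i + P $ j $ j) / 2" using b by (simp add: field_simps)
  have d: "- P $ i $ j \<le> (P $ i $ i + P $ j $ j) / 2" using a by (simp add: field_simps)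
  from c d show "\<bar>P $ i $ j\<bar> \<le> (P $ i $ i + P $ j $ j) / 2" by (rule abs_leI)
qed

lemma psd_kernel:
  fixes P :: "real^'n^'n"
  assumes sym: "transpose P = P" and psd: "\<And>x. 0 \<le> x \<bullet> (P *v x)"
    and z: "v \<bullet> (P *v v) = 0"
  shows "P *v v = 0"
proof -
  let ?w = "P *v v"
  have symq: "v \<bullet> (P *v w) = w \<bullet> (P *v v)" for w
    by (metis inner_commute inner_transpose sym)
  define b where "b = ?w \<bullet> (P *v v)"
  define c where "c = ?w \<bullet> (P *v ?w)"
  have c0: "0 \<le> c" unfolding c_def by (rule psd)
  have b: "b = norm ?w ^ 2" unfolding b_def by (simp add: power2_norm_eq_inner)
  define t where "t = - b / (c + 1)"
  have "0 \<le> (v + t *\<^sub>R ?w) \<bullet> (P *v (v + t *\<^sub>R ?w))" by (rule psd)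
  also have "\<dots> = 2 * t * b + t^2 * c"
    unfolding quad_add using z symq[of ?w]
    by (simp add: matrix_vector_mult_scaleR b_def c_def power2_eq_square algebra_simps)
  finally have h0: "0 \<le> 2 * t * b + t^2 * c" .
  have ct: "(c+1) * t = - b" unfolding t_def using c0 by simp
  have "(c+1)^2 * (2 * t * b + t^2 * c) = 2 * b * (c+1) * ((c+1) * t) + c * ((c+1)*t)^2"
    by (simp add: power2_eq_square algebra_simps)
  also have "\<dots> = b^2 * (- c - 2)" unfolding ct by (simp add: power2_eq_square algebra_simps)
  finally have "0 \<le> b^2 * (- c - 2)" using h0 by (metis zero_le_mult_iff zero_le_power2)
  then have h1: "b^2 * (c + 2) \<le> 0" by (simp add: algebra_simps)
  have "b = 0"
  proof (rule ccontr)
    assume "b \<noteq> 0"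
    then have "b^2 * (c + 2) > 0" using c0 by (intro mult_pos_pos) auto
    then show False using h1 by simp
  qed
  then show ?thesis using b by simp
qed

lemma unit_exists: "\<exists>v::real^'n. norm v = 1"
  by (rule exI[of _ "axis undefined 1"]) simp

lemma quad_cont: "continuous_on S (\<lambda>x::real^'n. x \<bullet> (M *v x))"
  by (intro continuous_intros)

lemma rayleigh_max:
  fixes X :: "real^'n^'n"
  shows "\<exists>v. norm v = 1 \<and> (\<forall>x. x \<bullet> (X *v x) \<le> (v \<bullet> (X *v v)) * norm x ^ 2)"
proof -
  have "compact (sphere (0::real^'n) 1)" by simp
  moreover have "sphere (0::real^'n) 1 \<noteq> {}" using unit_exists by auto
  ultimately obtain v where v: "v \<in> sphere 0 1" and mx: "\<forall>y\<in>sphere 0 1. y \<bullet> (X *v y) \<le> v \<bullet> (X *v v)"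
    using continuous_attains_sup[OF _ _ quad_cont] by blast
  have "x \<bullet> (X *v x) \<le> (v \<bullet> (X *v v)) * norm x ^ 2" for x
  proof (cases "x = 0")
    case False
    let ?y = "(1 / norm x) *\<^sub>R x"
    have "?y \<in> sphere 0 1" using False by simp
    then have "?y \<bullet> (X *v ?y) \<le> v \<bullet> (X *v v)" using mx by blast
    moreover have "?y \<bullet> (X *v ?y) = (x \<bullet> (X *v x)) / norm x ^ 2"
      by (simp add: matrix_vector_mult_scaleR power2_eq_square)
    ultimately have "(x \<bullet> (X *v x)) / norm x ^ 2 \<le> v \<bullet> (X *v v)" by linarith
    then show ?thesis using False by (simp add: pos_divide_le_eq)
  qed simp
  then show ?thesis using v by auto
qed

lemma rayleigh_min:
  fixes X :: "real^'n^'n"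
  shows "\<exists>v. norm v = 1 \<and> (\<forall>x. (v \<bullet> (X *v v)) * norm x ^ 2 \<le> x \<bullet> (X *v x))"
proof -
  obtain v where "norm v = 1" "\<forall>x. x \<bullet> ((-X) *v x) \<le> (v \<bullet> ((-X) *v v)) * norm x ^ 2"
    using rayleigh_max[of "-X"] by blast
  moreover have "(-X) *v y = - (X *v y)" for y
    by (simp add: vec_eq_iff matrix_vector_mult_def sum_negf)
  ultimately show ?thesis by (intro exI[of _ v]) auto
qed

lemma eig_finite:
  fixes M :: "real^'n^'n"
  assumes sym: "transpose M = M"
  shows "finite (eigenvalues M)"
proof -
  define E where "E = eigenvalues M"
  define v where "v l = (SOME v. v \<noteq> 0 \<and> M *v v = l *\<^sub>R v)" for l
  have vE: "v l \<noteq> 0 \<and> M *v v l = l *\<^sub>R v l" if "l \<in> E" for l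
  proof -
    from that obtain w where "w \<noteq> 0 \<and> M *v w = l *\<^sub>R w" unfolding E_def eigenvalues_def by auto
    then show ?thesis unfolding v_def by (rule someI)
  qed
  have inj: "inj_on v E"
  proof (rule inj_onI)
    fix l1 l2 assume a: "l1 \<in> E" "l2 \<in> E" "v l1 = v l2"
    then have "l1 *\<^sub>R v l1 = l2 *\<^sub>R v l1" using vE by metis
    then show "l1 = l2" using vE[OF a(1)] by (simp add: scaleR_cancel_right)
  qed
  have "pairwise orthogonal (v ` E)"
  proof (clarsimp simp: pairwise_def)
    fix l1 l2 assume a: "l1 \<in> E" "l2 \<in> E" "v l1 \<noteq> v l2"
    then have ne: "l1 \<noteq> l2" by auto
    have "l1 * (v l1 \<bullet> v l2) = (M *v v l1) \<bullet> v l2" using vE[OF a(1)] by simp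
    also have "\<dots> = v l1 \<bullet> (transpose M *v v l2)" by (rule inner_transpose[symmetric])
    also have "\<dots> = l2 * (v l1 \<bullet> v l2)" using vE[OF a(2)] sym by simp
    finally have "(l1 - l2) * (v l1 \<bullet> v l2) = 0" by (simp add: algebra_simps)
    then show "orthogonal (v l1) (v l2)" using ne by (simp add: orthogonal_def)
  qed
  then have "finite (v ` E)" by (rule pairwise_orthogonal_imp_finite)
  then show ?thesis using inj finite_imageD unfolding E_def by blast
qed

lemma outer_mv: "outer u v *v x = (v \<bullet> x) *\<^sub>R u"
  by (simp add: vec_eq_iff matrix_vector_mult_def outer_def inner_vec_def sum_distrib_left sum_distrib_right mult_ac)

lemma sum_mv: "(\<Sum>i\<in>S. f i) *v x = (\<Sum>i\<in>S. f i *v x)"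
  by (induct S rule: infinite_finite_induct) (simp_all add: matrix_vector_mult_add_rdistrib)

lemma Sigma_mv: "TD_Sigma \<mu> \<phi> *v x = (\<Sum>s\<in>UNIV. (\<mu> s * (\<phi> s \<bullet> x)) *\<^sub>R \<phi> s)"
  unfolding TD_Sigma_def sum_mv
  by (simp add: scaleR_matrix_vector_assoc[symmetric] outer_mv)

lemma Sigma_quad: "x \<bullet> (TD_Sigma \<mu> \<phi> *v x) = (\<Sum>s\<in>UNIV. \<mu> s * (\<phi> s \<bullet> x)^2)"
  unfolding Sigma_mv by (simp add: inner_sum_right power2_eq_square inner_commute mult_ac)

lemma A_quad: "x \<bullet> (TD_A P \<mu> \<gamma> \<phi> *v x) =
   (\<Sum>s\<in>UNIV. \<Sum>s'\<in>UNIV. \<mu> s * P s s' * ((\<phi> s \<bullet> x) - \<gamma> * (\<phi> s' \<bullet> x)) * (\<phi> s \<bullet> x))"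
  unfolding TD_A_def sum_mv
  by (simp add: scaleR_matrix_vector_assoc[symmetric] outer_mv inner_sum_right inner_diff_left inner_diff_right inner_commute mult_ac)

lemma Sigma_sym: "transpose (TD_Sigma \<mu> \<phi>) = TD_Sigma \<mu> \<phi>"
  by (simp add: vec_eq_iff transpose_def TD_Sigma_def outer_def mult_ac)

lemma td_real:
  fixes P :: "'s::finite \<Rightarrow> 's \<Rightarrow> real"
  assumes mk: "markov_kernel P" and st: "stationary_dist P \<mu>" and g: "0 \<le> \<gamma>"
  shows "(1 - \<gamma>) * (\<Sum>s\<in>UNIV. \<mu> s * a s ^ 2) \<le>
     (\<Sum>s\<in>UNIV. \<Sum>s'\<in>UNIV. \<mu> s * P s s' * (a s - \<gamma> * a s') * a s)"
proof -
  have P0: "0 \<le> P s s'" for s s' using mk unfolding markov_kernel_def by auto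
  have P1: "(\<Sum>s'\<in>UNIV. P s s') = 1" for s using mk unfolding markov_kernel_def by auto
  have m0: "0 \<le> \<mu> s" for s using st unfolding stationary_dist_def by auto
  have ms: "(\<Sum>s\<in>UNIV. \<mu> s * P s s') = \<mu> s'" for s' using st unfolding stationary_dist_def by auto
  define Q where "Q = (\<Sum>s\<in>UNIV. \<mu> s * a s ^ 2)"
  have e1: "(\<Sum>s\<in>UNIV. \<Sum>s'\<in>UNIV. \<mu> s * P s s' * a s ^ 2) = Q"
  proof -
    have "(\<Sum>s\<in>UNIV. \<Sum>s'\<in>UNIV. \<mu> s * P s s' * a s ^ 2) = (\<Sum>s\<in>UNIV. \<mu> s * a s ^ 2 * (\<Sum>s'\<in>UNIV. P s s'))"
      by (intro sum.cong refl) (simp only: sum_distrib_left, intro sum.cong refl, simp add: mult_ac)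
    then show ?thesis by (simp add: P1 Q_def)
  qed
  have e2: "(\<Sum>s\<in>UNIV. \<Sum>s'\<in>UNIV. \<mu> s * P s s' * a s' ^ 2) = Q"
  proof -
    have "(\<Sum>s\<in>UNIV. \<Sum>s'\<in>UNIV. \<mu> s * P s s' * a s' ^ 2) = (\<Sum>s'\<in>UNIV. \<Sum>s\<in>UNIV. \<mu> s * P s s' * a s' ^ 2)"
      by (rule sum.swap)
    also have "\<dots> = (\<Sum>s'\<in>UNIV. (\<Sum>s\<in>UNIV. \<mu> s * P s s') * a s' ^ 2)"
      by (simp add: sum_distrib_right)
    finally show ?thesis by (simp add: ms Q_def)
  qed
  have cross: "(\<Sum>s\<in>UNIV. \<Sum>s'\<in>UNIV. \<mu> s * P s s' * (a s * a s')) \<le> Q"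
  proof -
    have "(\<Sum>s\<in>UNIV. \<Sum>s'\<in>UNIV. \<mu> s * P s s' * (a s * a s')) \<le>
          (\<Sum>s\<in>UNIV. \<Sum>s'\<in>UNIV. \<mu> s * P s s' * ((a s ^ 2 + a s' ^ 2) / 2))"
    proof (intro sum_mono)
      fix s s'
      have "a s * a s' \<le> (a s ^ 2 + a s' ^ 2) / 2"
        using sum_squares_bound[of "a s" "a s'"] by (simp add: power2_eq_square)
      then show "\<mu> s * P s s' * (a s * a s') \<le> \<mu> s * P s s' * ((a s ^ 2 + a s' ^ 2) / 2)"
        by (intro mult_left_mono) (auto intro: mult_nonneg_nonneg m0 P0)
    qed
    also have "\<dots> = ((\<Sum>s\<in>UNIV. \<Sum>s'\<in>UNIV. \<mu> s * P s s' * a s ^ 2) + (\<Sum>s\<in>UNIV. \<Sum>s'\<in>UNIV. \<mu> s * P s s' * a s' ^ 2)) / 2"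
      by (simp add: sum.distrib[symmetric] sum_divide_distrib algebra_simps)
    also have "\<dots> = Q" using e1 e2 by simp
    finally show ?thesis .
  qed
  have "(\<Sum>s\<in>UNIV. \<Sum>s'\<in>UNIV. \<mu> s * P s s' * (a s - \<gamma> * a s') * a s) =
        (\<Sum>s\<in>UNIV. \<Sum>s'\<in>UNIV. \<mu> s * P s s' * a s ^ 2) - \<gamma> * (\<Sum>s\<in>UNIV. \<Sum>s'\<in>UNIV. \<mu> s * P s s' * (a s * a s'))"
    by (simp add: sum_subtractf sum_distrib_left power2_eq_square algebra_simps)
  also have "\<dots> \<ge> Q - \<gamma> * Q" using cross g e1 by (simp add: mult_left_mono)
  finally show ?thesis unfolding Q_def by (simp add: algebra_simps)
qed

lemma Sigma_pd:
  fixes \<phi> :: "'s::finite \<Rightarrow> real^'d"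
  assumes st: "stationary_dist P \<mu>" and lm: "lambda_min (TD_Sigma \<mu> \<phi>) > 0"
    and x: "x \<noteq> 0"
  shows "0 < x \<bullet> (TD_Sigma \<mu> \<phi> *v x)"
proof (rule ccontr)
  have m0: "0 \<le> \<mu> s" for s using st unfolding stationary_dist_def by auto
  assume "\<not> 0 < x \<bullet> (TD_Sigma \<mu> \<phi> *v x)"
  then have "(\<Sum>s\<in>UNIV. \<mu> s * (\<phi> s \<bullet> x)^2) = 0"
    unfolding Sigma_quad using m0 by (smt (verit) sum_nonneg zero_le_mult_iff zero_le_power2)
  then have "\<forall>s\<in>UNIV. \<mu> s * (\<phi> s \<bullet> x)^2 = 0"
    using m0 by (subst sum_nonneg_eq_0_iff[symmetric]) auto
  then have z: "\<mu> s * (\<phi> s \<bullet> x) = 0" for s by (simp add: power2_eq_square)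
  have "TD_Sigma \<mu> \<phi> *v x = 0 *\<^sub>R x" unfolding Sigma_mv by (simp only: z scaleR_zero_left sum.neutral_const)
  then have "0 \<in> eigenvalues (TD_Sigma \<mu> \<phi>)" unfolding eigenvalues_def using x by blast
  then have "lambda_min (TD_Sigma \<mu> \<phi>) \<le> 0"
    unfolding lambda_min_def using eig_finite[OF Sigma_sym] by (rule Min_le[rotated])
  then show False using lm by simp
qed

lemma A_coercive:
  fixes \<phi> :: "'s::finite \<Rightarrow> real^'d"
  assumes g: "0 \<le> \<gamma>" "\<gamma> < 1" and mk: "markov_kernel P" and st: "stationary_dist P \<mu>"
    and lm: "lambda_min (TD_Sigma \<mu> \<phi>) > 0"
  shows "\<exists>m>0. \<forall>x. m * norm x ^ 2 \<le> x \<bullet> (TD_A P \<mu> \<gamma> \<phi> *v x)"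
proof -
  let ?A = "TD_A P \<mu> \<gamma> \<phi>"
  have ge: "(1 - \<gamma>) * (x \<bullet> (TD_Sigma \<mu> \<phi> *v x)) \<le> x \<bullet> (?A *v x)" for x
    unfolding A_quad Sigma_quad using td_real[OF mk st g(1), of "\<lambda>s. \<phi> s \<bullet> x"] by simp
  obtain v where v: "norm v = 1" "\<forall>x. (v \<bullet> (?A *v v)) * norm x ^ 2 \<le> x \<bullet> (?A *v x)"
    using rayleigh_min[of ?A] by blast
  have "v \<noteq> 0" using v(1) by auto
  then have "0 < v \<bullet> (TD_Sigma \<mu> \<phi> *v v)" using Sigma_pd[OF st lm] by blast
  then have "0 < (1 - \<gamma>) * (v \<bullet> (TD_Sigma \<mu> \<phi> *v v))" using g by simp
  then have "0 < v \<bullet> (?A *v v)" using ge[of v] by linarith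
  then show ?thesis using v(2) by blast
qed

lemma transpose_diff: "transpose (A - B) = transpose A - transpose (B::real^'n^'n)"
  by (simp add: vec_eq_iff transpose_def)

lemma transpose_add: "transpose (A + B) = transpose A + transpose (B::real^'n^'n)"
  by (simp add: vec_eq_iff transpose_def)

lemma mat_mv: "(c *\<^sub>R mat 1) *v x = c *\<^sub>R (x::real^'n)"
  by (simp add: scaleR_matrix_vector_assoc[symmetric])

lemma X_bound:
  fixes A X Y :: "real^'d^'d"
  assumes m: "m > 0" and co: "\<And>x. m * norm x ^ 2 \<le> x \<bullet> (A *v x)" and e: "e > 0"
    and psd: "pos_semidef X" and eq: "e *\<^sub>R (A ** X + X ** transpose A) = Y"
  shows "spec_norm X \<le> (real CARD('d) ^ 2 / (2 * e * m)) * spec_norm Y"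
proof -
  have Xs: "transpose X = X" and Xp: "\<And>x. 0 \<le> x \<bullet> (X *v x)" using psd unfolding pos_semidef_def by auto
  obtain v where v: "norm v = 1" "\<forall>x. x \<bullet> (X *v x) \<le> (v \<bullet> (X *v v)) * norm x ^ 2"
    using rayleigh_max[of X] by blast
  define l where "l = v \<bullet> (X *v v)"
  have l0: "0 \<le> l" unfolding l_def by (rule Xp)
  define Pm where "Pm = l *\<^sub>R mat 1 - X"
  have Ps: "transpose Pm = Pm" unfolding Pm_def transpose_diff Xs by (simp add: transpose_scalar)
  have Pmv: "Pm *v x = l *\<^sub>R x - X *v x" for x
    unfolding Pm_def by (simp add: matrix_vector_mult_diff_rdistrib mat_mv)
  have Pp: "0 \<le> x \<bullet> (Pm *v x)" for x
    using v(2) unfolding Pmv l_def by (simp add: inner_diff_right power2_norm_eq_inner)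
  have "v \<bullet> (Pm *v v) = 0" unfolding Pmv using v(1) by (simp add: inner_diff_right l_def power2_norm_eq_inner[symmetric])
  then have "Pm *v v = 0" by (rule psd_kernel[OF Ps Pp])
  then have Xv: "X *v v = l *\<^sub>R v" unfolding Pmv by simp
  have "v \<bullet> (Y *v v) = e * (v \<bullet> (A *v (X *v v)) + v \<bullet> (X *v (transpose A *v v)))"
    unfolding eq[symmetric]
    by (simp add: scaleR_matrix_vector_assoc[symmetric] matrix_vector_mult_add_rdistrib
        matrix_vector_mul_assoc[symmetric] inner_add_right)
  also have "v \<bullet> (X *v (transpose A *v v)) = l * (v \<bullet> (A *v v))"
  proof -
    have "v \<bullet> (X *v (transpose A *v v)) = v \<bullet> (transpose X *v (transpose A *v v))" using Xs by simp
    also have "\<dots> = (X *v v) \<bullet> (transpose A *v v)" by (rule inner_transpose)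
    also have "\<dots> = l * (v \<bullet> (transpose A *v v))" using Xv by simp
    also have "v \<bullet> (transpose A *v v) = (A *v v) \<bullet> v" by (rule inner_transpose)
    finally show ?thesis by (simp add: inner_commute)
  qed
  finally have vy: "v \<bullet> (Y *v v) = 2 * e * l * (v \<bullet> (A *v v))"
    using Xv by (simp add: matrix_vector_mult_scaleR algebra_simps)
  have "m \<le> v \<bullet> (A *v v)" using co[of v] v(1) by simp
  then have "2 * e * l * m \<le> 2 * e * l * (v \<bullet> (A *v v))"
    using e l0 by (intro mult_left_mono) auto
  also have "\<dots> \<le> norm v * norm (Y *v v)" unfolding vy[symmetric] by (rule Cauchy_Schwarz_ineq2[THEN order_trans[OF abs_ge_self]])
  also have "\<dots> \<le> spec_norm Y" using sn_app[of Y v] v(1) by simp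
  finally have lb: "l \<le> spec_norm Y / (2 * e * m)" using e m by (simp add: field_simps)
  have ent: "\<bar>X $ i $ j\<bar> \<le> l" for i j
  proof -
    have "X $ i $ i \<le> l" "X $ j $ j \<le> l"
      using v(2)[rule_format, of "axis i 1"] v(2)[rule_format, of "axis j 1"] by (simp_all add: axis_mat l_def)
    then show ?thesis using psd_entry(2)[OF Xs Xp, of i j] by argo
  qed
  have "spec_norm X \<le> real CARD('d) * real CARD('d) * l"
    unfolding spec_norm_def by (rule onorm_le_matrix_component) (rule ent)
  also have "\<dots> \<le> real CARD('d) * real CARD('d) * (spec_norm Y / (2 * e * m))"
    by (intro mult_left_mono lb) auto
  finally show ?thesis by (simp add: power2_eq_square)
qed

lemma mm_add_r: "(A + B) ** C = A ** C + B ** (C::real^'n^'n)"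
  by (simp add: matrix_eq matrix_vector_mul_assoc[symmetric] matrix_vector_mult_add_rdistrib)

lemma mm_sum_r: "(\<Sum>i\<in>S. f i) ** (C::real^'n^'n) = (\<Sum>i\<in>S. f i ** C)"
  by (induct S rule: infinite_finite_induct) (simp_all add: mm_add_r)

lemma mm_sum_l: "(C::real^'n^'n) ** (\<Sum>i\<in>S. f i) = (\<Sum>i\<in>S. C ** f i)"
  by (induct S rule: infinite_finite_induct) (simp_all add: matrix_add_ldistrib)

lemma Mmv: "(mat 1 - c *\<^sub>R A) *v x = x - c *\<^sub>R (A *v (x::real^'n))"
  by (simp add: matrix_vector_mult_diff_rdistrib scaleR_matrix_vector_assoc[symmetric])

lemma M_comm: "(mat 1 - a *\<^sub>R A) ** (mat 1 - b *\<^sub>R A) = (mat 1 - b *\<^sub>R A) ** (mat 1 - a *\<^sub>R (A::real^'n^'n))"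
  by (simp add: matrix_eq matrix_vector_mul_assoc[symmetric] Mmv matrix_vector_mult_diff_distrib
      matrix_scaleR_vector_ac[symmetric] algebra_simps)

lemma foldr_prod: "foldr (\<lambda>k N. M k ** N) xs N0 = foldr (\<lambda>k N. M k ** N) xs (mat 1) ** (N0::real^'n^'n)"
  by (induct xs) (simp_all add: matrix_mul_assoc)

lemma prod_Suc:
  assumes "t \<le> Suc T"
  shows "mat_prod_range M t (Suc T) = mat_prod_range M t T ** (M (Suc T) :: real^'n^'n)"
proof -
  have "[t..<Suc (Suc T)] = [t..<Suc T] @ [Suc T]" using assms by simp
  then show ?thesis unfolding mat_prod_range_def
    by (simp del: upt_Suc add: foldr_prod[of M "[t..<Suc T]" "M (Suc T)"])
qed

lemma prod_self: "mat_prod_range M T T = (M T :: real^'n^'n)"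
  unfolding mat_prod_range_def by simp

lemma prod_comm:
  assumes "\<And>k. M k ** N = N ** (M k :: real^'n^'n)"
  shows "mat_prod_range M t T ** N = N ** mat_prod_range M t T"
proof -
  have "foldr (\<lambda>k N. M k ** N) xs (mat 1) ** N = N ** foldr (\<lambda>k N. M k ** N) xs (mat 1)" for xs
    by (induct xs) (simp_all, metis assms matrix_mul_assoc)
  then show ?thesis unfolding mat_prod_range_def by blast
qed

definition Ssum :: "(nat \<Rightarrow> real^'n^'n) \<Rightarrow> real^'n^'n \<Rightarrow> nat \<Rightarrow> real^'n^'n" where
  "Ssum M Y T = (\<Sum>t\<in>{1..T}. mat_prod_range M t T ** Y ** transpose (mat_prod_range M t T))"

lemma Ssum_0: "Ssum M Y 0 = 0" unfolding Ssum_def by simp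

lemma Ssum_Suc:
  fixes A :: "real^'n^'n" and c :: "nat \<Rightarrow> real"
  defines "M \<equiv> \<lambda>k. mat 1 - c k *\<^sub>R A"
  shows "Ssum M Y (Suc T) = M (Suc T) ** (Ssum M Y T + Y) ** transpose (M (Suc T))"
proof -
  let ?M = "M (Suc T)"
  have cm: "M k ** ?M = ?M ** M k" for k unfolding M_def by (rule M_comm)
  have Q: "mat_prod_range M t (Suc T) = ?M ** mat_prod_range M t T" if "t \<in> {1..T}" for t
    using that prod_Suc[of t T M] prod_comm[OF cm] by simp
  have "Ssum M Y (Suc T) = (\<Sum>t\<in>{1..T}. mat_prod_range M t (Suc T) ** Y ** transpose (mat_prod_range M t (Suc T)))
        + ?M ** Y ** transpose ?M"
    unfolding Ssum_def by (simp add: prod_self)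
  also have "(\<Sum>t\<in>{1..T}. mat_prod_range M t (Suc T) ** Y ** transpose (mat_prod_range M t (Suc T)))
      = (\<Sum>t\<in>{1..T}. ?M ** (mat_prod_range M t T ** Y ** transpose (mat_prod_range M t T)) ** transpose ?M)"
    by (intro sum.cong refl) (simp add: Q matrix_transpose_mul matrix_mul_assoc)
  also have "\<dots> = ?M ** Ssum M Y T ** transpose ?M"
    unfolding Ssum_def by (simp add: mm_sum_l mm_sum_r)
  finally show ?thesis by (simp add: matrix_add_ldistrib mm_add_r)
qed

lemma step_norm:
  fixes A :: "real^'n^'n"
  assumes co: "\<And>x. m * norm x ^ 2 \<le> x \<bullet> (A *v x)" and bd: "\<And>x. norm (A *v x) \<le> a * norm x"
    and h: "0 \<le> \<eta>" "0 \<le> a" "m \<le> a"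
  shows "spec_norm (mat 1 - \<eta> *\<^sub>R A) \<le> sqrt (1 - 2 * \<eta> * m + \<eta>^2 * a^2)"
proof (rule sn_le)
  fix x
  have q0: "0 \<le> 1 - 2 * \<eta> * m + \<eta>^2 * a^2"
  proof -
    have "\<eta> * m \<le> \<eta> * a" using h by (intro mult_left_mono) auto
    moreover have "(1 - \<eta> * a)^2 = 1 - 2 * \<eta> * a + \<eta>^2 * a^2" by (simp add: power2_eq_square algebra_simps)
    ultimately have "(1 - \<eta> * a)^2 \<le> 1 - 2 * \<eta> * m + \<eta>^2 * a^2" by linarith
    then show ?thesis by (meson order_trans zero_le_power2)
  qed
  have "norm ((mat 1 - \<eta> *\<^sub>R A) *v x) ^ 2 = norm x ^ 2 - 2 * \<eta> * (x \<bullet> (A *v x)) + \<eta>^2 * norm (A *v x) ^ 2"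
  proof -
    have "(x - \<eta> *\<^sub>R (A *v x)) \<bullet> (x - \<eta> *\<^sub>R (A *v x)) = x \<bullet> x - 2 * \<eta> * (x \<bullet> (A *v x)) + \<eta>^2 * ((A *v x) \<bullet> (A *v x))"
      by (simp add: inner_diff_left inner_diff_right inner_commute[of "A *v x" x] power2_eq_square algebra_simps)
    then show ?thesis unfolding Mmv power2_norm_eq_inner .
  qed
  also have "\<dots> \<le> norm x ^ 2 - 2 * \<eta> * (m * norm x ^ 2) + \<eta>^2 * (a * norm x) ^ 2"
  proof -
    have "2 * \<eta> * (m * norm x ^ 2) \<le> 2 * \<eta> * (x \<bullet> (A *v x))" using co h by (simp add: mult_left_mono)
    moreover have "norm (A *v x) ^ 2 \<le> (a * norm x) ^ 2" using bd by (simp add: power_mono)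
    then have "\<eta>^2 * norm (A *v x) ^ 2 \<le> \<eta>^2 * (a * norm x) ^ 2" by (simp add: mult_left_mono)
    ultimately show ?thesis by linarith
  qed
  also have "\<dots> = (1 - 2 * \<eta> * m + \<eta>^2 * a^2) * norm x ^ 2"
    by (simp only: power_mult_distrib) algebra
  also have "\<dots> = (sqrt (1 - 2 * \<eta> * m + \<eta>^2 * a^2) * norm x) ^ 2"
    using q0 by (simp only: power_mult_distrib real_sqrt_pow2)
  finally show "norm ((mat 1 - \<eta> *\<^sub>R A) *v x) \<le> sqrt (1 - 2 * \<eta> * m + \<eta>^2 * a^2) * norm x"
    by (rule power2_le_imp_le) (use q0 in simp)
qed

lemma contract:
  fixes A D :: "real^'n^'n"
  assumes co: "\<And>x. m * norm x ^ 2 \<le> x \<bullet> (A *v x)" and bd: "\<And>x. norm (A *v x) \<le> a * norm x"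
    and bdt: "\<And>x. norm (transpose A *v x) \<le> a * norm x"
    and h: "0 \<le> \<eta>" "0 \<le> a" "m \<le> a"
  shows "spec_norm ((mat 1 - \<eta> *\<^sub>R A) ** D ** transpose (mat 1 - \<eta> *\<^sub>R A))
     \<le> (1 - 2 * \<eta> * m + \<eta>^2 * a^2) * spec_norm D"
proof -
  let ?q = "1 - 2 * \<eta> * m + \<eta>^2 * a^2"
  have q0: "0 \<le> ?q"
  proof -
    have "\<eta> * m \<le> \<eta> * a" using h by (intro mult_left_mono) auto
    moreover have "(1 - \<eta> * a)^2 = 1 - 2 * \<eta> * a + \<eta>^2 * a^2" by (simp add: power2_eq_square algebra_simps)
    ultimately have "(1 - \<eta> * a)^2 \<le> ?q" by linarith
    then show ?thesis by (meson order_trans zero_le_power2)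
  qed
  have cot: "m * norm x ^ 2 \<le> x \<bullet> (transpose A *v x)" for x
  proof -
    have "x \<bullet> (transpose A *v x) = x \<bullet> (A *v x)" by (metis inner_transpose inner_commute)
    then show ?thesis using co[of x] by simp
  qed
  have tr: "transpose (mat 1 - \<eta> *\<^sub>R A) = mat 1 - \<eta> *\<^sub>R transpose A"
    by (simp add: transpose_diff transpose_scalar)
  have n1: "spec_norm (mat 1 - \<eta> *\<^sub>R A) \<le> sqrt ?q" by (rule step_norm[OF co bd h])
  have n2: "spec_norm (transpose (mat 1 - \<eta> *\<^sub>R A)) \<le> sqrt ?q" unfolding tr by (rule step_norm[OF cot bdt h])
  have "spec_norm ((mat 1 - \<eta> *\<^sub>R A) ** D ** transpose (mat 1 - \<eta> *\<^sub>R A))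
      \<le> spec_norm ((mat 1 - \<eta> *\<^sub>R A) ** D) * spec_norm (transpose (mat 1 - \<eta> *\<^sub>R A))" by (rule sn_mul)
  also have "\<dots> \<le> (spec_norm (mat 1 - \<eta> *\<^sub>R A) * spec_norm D) * spec_norm (transpose (mat 1 - \<eta> *\<^sub>R A))"
    by (intro mult_right_mono sn_mul sn_nonneg)
  also have "\<dots> \<le> (sqrt ?q * spec_norm D) * sqrt ?q"
    using q0 by (intro mult_mono n1 n2 mult_nonneg_nonneg sn_nonneg) auto
  also have "\<dots> = (sqrt ?q * sqrt ?q) * spec_norm D" by (simp only: mult_ac)
  also have "\<dots> = ?q * spec_norm D" using q0 by simp
  finally show ?thesis .
qed

lemma scal:
  fixes t \<alpha> \<eta>0 \<eta> :: real
  assumes a: "1/2 < \<alpha>" "\<alpha> < 1" and t: "t = 0 \<or> 1 \<le> t" and e0: "0 < \<eta>0"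
    and eta: "\<eta> = \<eta>0 * (t + 1) powr (- \<alpha>)"
  defines "g \<equiv> (if t = 0 then 1 else t powr (\<alpha> - 1))"
  shows "\<bar>t powr \<alpha> - (t + 1) powr \<alpha>\<bar> \<le> g
    \<and> \<bar>1 - \<eta> * t powr \<alpha> / \<eta>0\<bar> \<le> g
    \<and> \<eta> \<le> \<eta>0 * g
    \<and> \<eta>^2 * t powr \<alpha> \<le> \<eta>0^2 * g
    \<and> \<eta>^2 \<le> \<eta>0^2 * g"
  proof (cases "t = 0")
    case True
    then show ?thesis unfolding g_def eta by simp
  next
    case False
    then have t1: "1 \<le> t" using t by auto
    then have tp: "0 < t" by simp
    have g: "g = t powr (\<alpha> - 1)" using False unfolding g_def by simp
    have ta: "t powr (\<alpha> - 1) = t powr \<alpha> / t" using tp by (simp add: powr_diff)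
    have "(t + 1) powr \<alpha> = t powr \<alpha> * (1 + 1/t) powr \<alpha>"
    proof -
      have "t + 1 = t * (1 + 1/t)" using tp by (simp add: field_simps)
      then show ?thesis by (metis powr_mult)
    qed
    also have "(1 + 1/t) powr \<alpha> \<le> (1 + 1/t) powr 1"
      using a tp by (intro powr_mono) auto
    also have "(1 + 1/t) powr 1 = 1 + 1/t" using tp by simp
    finally have up: "(t + 1) powr \<alpha> \<le> t powr \<alpha> + t powr (\<alpha> - 1)"
      unfolding ta using tp by (simp add: field_simps mult_left_mono)
    have lo: "t powr \<alpha> \<le> (t + 1) powr \<alpha>" using a tp by (intro powr_mono2) auto
    have r1: "\<bar>t powr \<alpha> - (t + 1) powr \<alpha>\<bar> \<le> g" unfolding g using up lo by linarith
    define b where "b = t / (t + 1)"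
    have b0: "0 < b" "b \<le> 1" unfolding b_def using tp by auto
    have etb: "\<eta> * t powr \<alpha> / \<eta>0 = b powr \<alpha>"
      unfolding eta b_def using e0 tp by (simp add: powr_divide powr_minus field_simps)
    have "b powr 1 \<le> b powr \<alpha>" using a b0 by (intro powr_mono') auto
    then have bb: "b \<le> b powr \<alpha>" using b0 by simp
    have "b powr \<alpha> \<le> 1" using a b0 by (intro powr_le1) auto
    then have "\<bar>1 - \<eta> * t powr \<alpha> / \<eta>0\<bar> \<le> 1 - b" unfolding etb using bb by linarith
    also have "1 - b = 1 / (t + 1)" unfolding b_def using tp by (simp add: field_simps)
    also have "\<dots> \<le> 1 / t" using tp by (simp add: frac_le)
    also have "1 / t = t powr (-1)" using tp by (simp add: powr_minus_divide)
    also have "\<dots> \<le> t powr (\<alpha> - 1)" using a t1 by (intro powr_mono) auto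
    finally have r2: "\<bar>1 - \<eta> * t powr \<alpha> / \<eta>0\<bar> \<le> g" unfolding g .
    define p where "p = (t + 1) powr (- \<alpha>)"
    define r where "r = t powr (- \<alpha>)"
    have p0: "0 \<le> p" unfolding p_def by simp
    have pr: "p \<le> r" unfolding p_def r_def using a tp by (intro powr_mono2') auto
    have rg: "r \<le> t powr (\<alpha> - 1)" unfolding r_def using a t1 by (intro powr_mono) auto
    have r1': "r \<le> 1" unfolding r_def using a t1 ge_one_powr_ge_zero[of t \<alpha>] by (simp add: powr_minus_divide)
    have rt: "r * t powr \<alpha> = 1" unfolding r_def using tp by (simp add: powr_minus)
    have etp: "\<eta> = \<eta>0 * p" unfolding eta p_def ..
    have r3: "\<eta> \<le> \<eta>0 * g" unfolding etp g using e0 pr rg by (simp add: mult_left_mono)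
    have pp: "p^2 \<le> r^2" using p0 pr by (simp add: power_mono)
    have "\<eta>^2 * t powr \<alpha> = \<eta>0^2 * (p^2 * t powr \<alpha>)" unfolding etp by (simp add: power_mult_distrib)
    also have "\<dots> \<le> \<eta>0^2 * (r^2 * t powr \<alpha>)" by (intro mult_left_mono mult_right_mono pp) auto
    also have "r^2 * t powr \<alpha> = r" using rt by (simp add: power2_eq_square)
    also have "\<eta>0^2 * r \<le> \<eta>0^2 * g" unfolding g using rg by (simp add: mult_left_mono)
    finally have r4: "\<eta>^2 * t powr \<alpha> \<le> \<eta>0^2 * g" .
    have r2r: "r^2 \<le> r" using r1' pr p0 by (simp add: power2_eq_square mult_left_le)
    have "\<eta>^2 = \<eta>0^2 * p^2" unfolding etp by (simp add: power_mult_distrib)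
    also have "\<dots> \<le> \<eta>0^2 * r^2" by (intro mult_left_mono pp) auto
    also have "\<dots> \<le> \<eta>0^2 * r" by (intro mult_left_mono r2r) auto
    also have "\<eta>0^2 * r \<le> \<eta>0^2 * g" unfolding g using rg by (simp add: mult_left_mono)
    finally have r5: "\<eta>^2 \<le> \<eta>0^2 * g" .
    show ?thesis using r1 r2 r3 r4 r5 by blast
  qed

lemma mm_diff_r: "(A - B) ** C = A ** C - B ** (C::real^'n^'n)"
  by (simp add: matrix_eq matrix_vector_mul_assoc[symmetric] matrix_vector_mult_diff_rdistrib)
lemma mm_diff_l: "C ** (A - B) = C ** A - C ** (B::real^'n^'n)"
  by (simp add: matrix_eq matrix_vector_mul_assoc[symmetric] matrix_vector_mult_diff_rdistrib matrix_vector_mult_diff_distrib)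
lemma mm_scale_l: "(c *\<^sub>R A) ** B = c *\<^sub>R (A ** (B::real^'n^'n))"
  by (simp add: scalar_matrix_assoc)
lemma mm_scale_r: "A ** (c *\<^sub>R B) = c *\<^sub>R (A ** (B::real^'n^'n))"
  by (simp add: matrix_scalar_ac scalar_matrix_assoc)

lemma MZM:
  fixes A Z :: "real^'n^'n"
  shows "(mat 1 - \<eta> *\<^sub>R A) ** Z ** transpose (mat 1 - \<eta> *\<^sub>R A)
    = Z - \<eta> *\<^sub>R (A ** Z + Z ** transpose A) + \<eta>^2 *\<^sub>R (A ** Z ** transpose A)"
proof -
  have tr: "transpose (mat 1 - \<eta> *\<^sub>R A) = mat 1 - \<eta> *\<^sub>R transpose A"
    by (simp add: transpose_diff transpose_scalar)
  have "(mat 1 - \<eta> *\<^sub>R A) ** Z ** (mat 1 - \<eta> *\<^sub>R transpose A)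
     = (Z - \<eta> *\<^sub>R (A ** Z)) ** (mat 1 - \<eta> *\<^sub>R transpose A)"
    by (simp only: mm_diff_r mm_scale_l matrix_mul_lid)
  also have "\<dots> = Z - \<eta> *\<^sub>R (Z ** transpose A) - \<eta> *\<^sub>R (A ** Z) + (\<eta> * \<eta>) *\<^sub>R (A ** Z ** transpose A)"
    by (simp only: mm_diff_r mm_diff_l mm_scale_l mm_scale_r matrix_mul_rid matrix_mul_assoc scaleR_scaleR) (simp add: algebra_simps)
  finally show ?thesis unfolding tr by (simp add: power2_eq_square algebra_simps)
qed


lemma R_ident:
  fixes A X Y :: "real^'n^'n"
  assumes eq: "e *\<^sub>R (A ** X + X ** transpose A) = Y" and e: "e \<noteq> 0"
  shows "(mat 1 - \<eta> *\<^sub>R A) ** (s *\<^sub>R X + Y) ** transpose (mat 1 - \<eta> *\<^sub>R A) - s' *\<^sub>R X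
    = (s - s') *\<^sub>R X + (1 - \<eta> * s / e) *\<^sub>R Y - \<eta> *\<^sub>R (A ** Y + Y ** transpose A)
      + \<eta>^2 *\<^sub>R (A ** (s *\<^sub>R X + Y) ** transpose A)"
proof -
  have ax: "A ** X + X ** transpose A = (1/e) *\<^sub>R Y" using arg_cong[OF eq, of "\<lambda>M. (1/e) *\<^sub>R M"] e by simp
  have "A ** (s *\<^sub>R X + Y) + (s *\<^sub>R X + Y) ** transpose A
     = s *\<^sub>R (A ** X + X ** transpose A) + (A ** Y + Y ** transpose A)"
    by (simp only: matrix_add_ldistrib mm_add_r mm_scale_l mm_scale_r scaleR_add_right) (simp add: algebra_simps)
  also have "\<dots> = (s / e) *\<^sub>R Y + (A ** Y + Y ** transpose A)" unfolding ax by simp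
  finally have h: "A ** (s *\<^sub>R X + Y) + (s *\<^sub>R X + Y) ** transpose A = (s / e) *\<^sub>R Y + (A ** Y + Y ** transpose A)" .
  show ?thesis unfolding MZM h by (simp add: algebra_simps scaleR_diff_left)
qed

lemma R_bound:
  fixes A X Y :: "real^'n^'n"
  assumes a: "spec_norm A \<le> a" "spec_norm (transpose A) \<le> a" and \<eta>: "0 \<le> \<eta>"
  shows "spec_norm ((s - s') *\<^sub>R X + c *\<^sub>R Y - \<eta> *\<^sub>R (A ** Y + Y ** transpose A)
      + \<eta>^2 *\<^sub>R (A ** (s *\<^sub>R X + Y) ** transpose A))
    \<le> \<bar>s - s'\<bar> * spec_norm X + \<bar>c\<bar> * spec_norm Y + \<eta> * (2 * a * spec_norm Y)
       + \<eta>^2 * (a * a * (\<bar>s\<bar> * spec_norm X + spec_norm Y))"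
proof -
  have a0: "0 \<le> a" using a(1) sn_nonneg[of A] by linarith
  have n1: "spec_norm (A ** Y + Y ** transpose A) \<le> 2 * a * spec_norm Y"
  proof -
    have "spec_norm (A ** Y + Y ** transpose A) \<le> spec_norm (A ** Y) + spec_norm (Y ** transpose A)"
      by (rule sn_add)
    also have "\<dots> \<le> spec_norm A * spec_norm Y + spec_norm Y * spec_norm (transpose A)"
      by (intro add_mono sn_mul)
    also have "\<dots> \<le> a * spec_norm Y + spec_norm Y * a"
      using a sn_nonneg[of Y] by (intro add_mono mult_right_mono mult_left_mono) auto
    finally show ?thesis by simp
  qed
  have n2: "spec_norm (A ** (s *\<^sub>R X + Y) ** transpose A) \<le> a * a * (\<bar>s\<bar> * spec_norm X + spec_norm Y)"
  proof -
    have "spec_norm (s *\<^sub>R X + Y) \<le> spec_norm (s *\<^sub>R X) + spec_norm Y" by (rule sn_add)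
    also have "\<dots> \<le> \<bar>s\<bar> * spec_norm X + spec_norm Y" by (intro add_mono sn_scale order_refl)
    finally have z: "spec_norm (s *\<^sub>R X + Y) \<le> \<bar>s\<bar> * spec_norm X + spec_norm Y" .
    have "spec_norm (A ** (s *\<^sub>R X + Y) ** transpose A) \<le> spec_norm (A ** (s *\<^sub>R X + Y)) * spec_norm (transpose A)"
      by (rule sn_mul)
    also have "\<dots> \<le> (spec_norm A * spec_norm (s *\<^sub>R X + Y)) * spec_norm (transpose A)"
      by (intro mult_right_mono sn_mul sn_nonneg)
    also have "\<dots> \<le> (a * (\<bar>s\<bar> * spec_norm X + spec_norm Y)) * a"
      using a z sn_nonneg a0 by (intro mult_mono mult_nonneg_nonneg) auto
    finally show ?thesis by (simp add: mult_ac)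
  qed
  let ?t1 = "(s - s') *\<^sub>R X" and ?t2 = "c *\<^sub>R Y" and ?t3 = "\<eta> *\<^sub>R (A ** Y + Y ** transpose A)"
    and ?t4 = "\<eta>^2 *\<^sub>R (A ** (s *\<^sub>R X + Y) ** transpose A)"
  have "spec_norm (?t1 + ?t2 - ?t3 + ?t4) \<le> spec_norm (?t1 + ?t2 - ?t3) + spec_norm ?t4" by (rule sn_add)
  also have "spec_norm (?t1 + ?t2 - ?t3) \<le> spec_norm (?t1 + ?t2) + spec_norm ?t3" by (rule sn_diff)
  also have "spec_norm (?t1 + ?t2) \<le> spec_norm ?t1 + spec_norm ?t2" by (rule sn_add)
  also have "spec_norm ?t1 + spec_norm ?t2 + spec_norm ?t3 + spec_norm ?t4 \<le>
      \<bar>s - s'\<bar> * spec_norm X + \<bar>c\<bar> * spec_norm Y + \<eta> * (2 * a * spec_norm Y)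
       + \<eta>^2 * (a * a * (\<bar>s\<bar> * spec_norm X + spec_norm Y))"
  proof (intro add_mono)
    show "spec_norm ?t1 \<le> \<bar>s - s'\<bar> * spec_norm X" by (rule sn_scale)
    show "spec_norm ?t2 \<le> \<bar>c\<bar> * spec_norm Y" by (rule sn_scale)
    have "spec_norm ?t3 \<le> \<bar>\<eta>\<bar> * spec_norm (A ** Y + Y ** transpose A)" by (rule sn_scale)
    also have "\<dots> \<le> \<eta> * (2 * a * spec_norm Y)" using \<eta> n1 by (simp add: mult_left_mono)
    finally show "spec_norm ?t3 \<le> \<eta> * (2 * a * spec_norm Y)" .
    have "spec_norm ?t4 \<le> \<bar>\<eta>^2\<bar> * spec_norm (A ** (s *\<^sub>R X + Y) ** transpose A)" by (rule sn_scale)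
    also have "\<dots> \<le> \<eta>^2 * (a * a * (\<bar>s\<bar> * spec_norm X + spec_norm Y))" using n2 by (simp add: mult_left_mono)
    finally show "spec_norm ?t4 \<le> \<eta>^2 * (a * a * (\<bar>s\<bar> * spec_norm X + spec_norm Y))" .
  qed
  finally show ?thesis by simp
qed

lemma w_step:
  fixes T :: nat and \<alpha> c B w q :: real
  assumes a: "1/2 < \<alpha>" "\<alpha> < 1" and T: "1 \<le> T" and c: "0 < c" and B: "2 \<le> c * B"
    and q: "0 \<le> q" "q \<le> 1 - c * (real T + 1) powr (- \<alpha>)"
    and w: "w \<le> B * real T powr (2 * \<alpha> - 1)"
  shows "q * w + real T powr (\<alpha> - 1) \<le> B * (real T + 1) powr (2 * \<alpha> - 1)"
proof -
  define t where "t = real T"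
  have t1: "1 \<le> t" unfolding t_def using T by simp
  then have tp: "0 < t" by simp
  have "0 < c * B" using B by linarith
  then have B0: "0 \<le> B" using c zero_less_mult_pos by (metis less_imp_le)
  define u where "u = (t + 1) powr (- \<alpha>)"
  have tp_split: "t powr (2 * \<alpha> - 1) = t powr (\<alpha> - 1) * t powr \<alpha>"
    by (simp add: powr_add[symmetric])
  define b where "b = t / (t + 1)"
  have b0: "0 < b" "b \<le> 1" unfolding b_def using tp by auto
  have ub: "u * t powr \<alpha> = b powr \<alpha>"
    unfolding u_def b_def using tp by (simp add: powr_divide powr_minus field_simps)
  have "b powr 1 \<le> b powr \<alpha>" using a b0 by (intro powr_mono') auto
  then have "b \<le> b powr \<alpha>" using b0 by simp
  moreover have "1/2 \<le> b" unfolding b_def using t1 by (simp add: field_simps)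
  ultimately have uh: "1/2 \<le> u * t powr \<alpha>" unfolding ub by linarith
  have BT0: "0 \<le> B * t powr (2 * \<alpha> - 1)" using B0 by simp
  have "q * w \<le> q * (B * t powr (2 * \<alpha> - 1))" using q(1) w unfolding t_def by (simp add: mult_left_mono)
  also have "\<dots> \<le> (1 - c * u) * (B * t powr (2 * \<alpha> - 1))"
    using q(2) BT0 unfolding u_def t_def by (intro mult_right_mono) auto
  finally have s1: "q * w \<le> B * t powr (2 * \<alpha> - 1) - c * u * B * t powr (2 * \<alpha> - 1)"
    by (simp add: algebra_simps)
  have "t powr (\<alpha> - 1) = 2 * (1/2) * t powr (\<alpha> - 1)" by simp
  also have "\<dots> \<le> (c * B) * (u * t powr \<alpha>) * t powr (\<alpha> - 1)"
    using B uh by (intro mult_right_mono mult_mono) auto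
  also have "\<dots> = c * u * B * t powr (2 * \<alpha> - 1)" unfolding tp_split by (simp add: mult_ac)
  finally have s2: "t powr (\<alpha> - 1) \<le> c * u * B * t powr (2 * \<alpha> - 1)" .
  have s3: "B * t powr (2 * \<alpha> - 1) \<le> B * (t + 1) powr (2 * \<alpha> - 1)"
    using B0 a tp by (intro mult_left_mono powr_mono2) auto
  show ?thesis using s1 s2 s3 unfolding t_def by linarith
qed

lemma w_bound:
  fixes q g :: "nat \<Rightarrow> real" and \<alpha> c :: real
  assumes a: "1/2 < \<alpha>" "\<alpha> < 1" and c: "0 < c" and q0: "\<And>T. 0 \<le> q T"
    and ev: "\<And>T. T0 \<le> T \<Longrightarrow> q T \<le> 1 - c * (real T + 1) powr (- \<alpha>)"
    and gT: "\<And>T. 1 \<le> T \<Longrightarrow> g T = real T powr (\<alpha> - 1)"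
  shows "\<exists>B. \<forall>T\<ge>1. rec_nat 0 (\<lambda>T x. q T * x + g T) T \<le> B * real T powr (2 * \<alpha> - 1)"
proof -
  define w where "w = rec_nat 0 (\<lambda>T x. q T * x + g T)"
  have wS: "w (Suc T) = q T * w T + g T" for T unfolding w_def by simp
  define T1 where "T1 = max T0 1"
  define B where "B = 2 / c + (\<Sum>T\<in>{1..T1}. \<bar>w T\<bar> / real T powr (2 * \<alpha> - 1))"
  have cB: "2 \<le> c * B"
  proof -
    have "0 \<le> (\<Sum>T\<in>{1..T1}. \<bar>w T\<bar> / real T powr (2 * \<alpha> - 1))" by (intro sum_nonneg) auto
    then show ?thesis unfolding B_def using c by (simp add: distrib_left)
  qed
  have small: "w T \<le> B * real T powr (2 * \<alpha> - 1)" if "1 \<le> T" "T \<le> T1" for T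
  proof -
    have pT: "0 < real T powr (2 * \<alpha> - 1)" using that by simp
    have "\<bar>w T\<bar> / real T powr (2 * \<alpha> - 1) \<le> (\<Sum>T\<in>{1..T1}. \<bar>w T\<bar> / real T powr (2 * \<alpha> - 1))"
      using that by (intro member_le_sum) auto
    moreover have "0 \<le> 2 / c" using c by simp
    ultimately have "\<bar>w T\<bar> / real T powr (2 * \<alpha> - 1) \<le> B" unfolding B_def by linarith
    then have "\<bar>w T\<bar> \<le> B * real T powr (2 * \<alpha> - 1)" using pT by (simp add: pos_divide_le_eq)
    then show ?thesis by linarith
  qed
  have big: "w T \<le> B * real T powr (2 * \<alpha> - 1)" if "T1 \<le> T" for T
    using that
  proof (induct T rule: nat_induct_at_least)
    case base
    show ?case using small[of T1] unfolding T1_def by simp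
  next
    case (Suc n)
    have n1: "1 \<le> n" "T0 \<le> n" using Suc(1) unfolding T1_def by auto
    have "w (Suc n) = q n * w n + real n powr (\<alpha> - 1)" using wS gT[OF n1(1)] by simp
    also have "\<dots> \<le> B * (real n + 1) powr (2 * \<alpha> - 1)"
      by (rule w_step[OF a n1(1) c cB q0 ev[OF n1(2)] Suc(2)])
    finally show ?case by (simp add: add.commute)
  qed
  have "\<forall>T\<ge>1. w T \<le> B * real T powr (2 * \<alpha> - 1)"
  proof (intro allI impI)
    fix T :: nat assume "1 \<le> T"
    then show "w T \<le> B * real T powr (2 * \<alpha> - 1)" using small big by (cases "T \<le> T1") auto
  qed
  then show ?thesis unfolding w_def by blast
qed

lemma d_le_w:
  fixes d q g :: "nat \<Rightarrow> real"
  assumes d0: "d 0 \<le> 0" and q0: "\<And>T. 0 \<le> q T" and K: "0 \<le> K"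
    and ds: "\<And>T. d (Suc T) \<le> q T * d T + K * g T"
  shows "d T \<le> K * rec_nat 0 (\<lambda>T x. q T * x + g T) T"
proof (induct T)
  case 0 then show ?case using d0 by simp
next
  case (Suc T)
  have "d (Suc T) \<le> q T * d T + K * g T" by (rule ds)
  also have "\<dots> \<le> q T * (K * rec_nat 0 (\<lambda>T x. q T * x + g T) T) + K * g T"
    using Suc q0 by (simp add: mult_left_mono)
  finally show ?case by (simp add: algebra_simps)
qed

lemma q_nonneg: "0 \<le> \<eta> \<Longrightarrow> 0 \<le> a \<Longrightarrow> m \<le> a \<Longrightarrow> 0 \<le> 1 - 2 * \<eta> * m + \<eta>^2 * (a::real)^2"
proof -
  assume h: "0 \<le> \<eta>" "0 \<le> a" "m \<le> a"
  have "\<eta> * m \<le> \<eta> * a" using h by (intro mult_left_mono) auto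
  moreover have "(1 - \<eta> * a)^2 = 1 - 2 * \<eta> * a + \<eta>^2 * a^2" by (simp add: power2_eq_square algebra_simps)
  ultimately have "(1 - \<eta> * a)^2 \<le> 1 - 2 * \<eta> * m + \<eta>^2 * a^2" by linarith
  then show ?thesis by (meson order_trans zero_le_power2)
qed

lemma sn_zero: "spec_norm (0::real^'n^'n) = 0"
proof -
  have "spec_norm (0::real^'n^'n) \<le> 0" by (rule sn_le) simp
  then show ?thesis using sn_nonneg[of "0::real^'n^'n"] by linarith
qed

lemma D_step:
  fixes A X Y :: "real^'d^'d" and T :: nat
  assumes co: "\<And>x. m * norm x ^ 2 \<le> x \<bullet> (A *v x)"
    and an: "spec_norm A \<le> a" "spec_norm (transpose A) \<le> a" and ma: "m \<le> a"
    and e0: "0 < \<eta>0" and eq: "\<eta>0 *\<^sub>R (A ** X + X ** transpose A) = Y"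
    and nX: "spec_norm X \<le> cX * spec_norm Y"
    and al: "1/2 < \<alpha>" "\<alpha> < 1"
  defines "\<eta> \<equiv> \<eta>0 * real (Suc T) powr (- \<alpha>)"
    and "g \<equiv> (if real T = 0 then 1 else real T powr (\<alpha> - 1))"
    and "K \<equiv> cX + 1 + 2 * a * \<eta>0 + \<eta>0^2 * a^2 * (cX + 1)"
  shows "spec_norm (Ssum (\<lambda>k. mat 1 - (\<eta>0 * real k powr (- \<alpha>)) *\<^sub>R A) Y (Suc T) - real (Suc T) powr \<alpha> *\<^sub>R X)
    \<le> (1 - 2 * \<eta> * m + \<eta>^2 * a^2) * spec_norm (Ssum (\<lambda>k. mat 1 - (\<eta>0 * real k powr (- \<alpha>)) *\<^sub>R A) Y T - real T powr \<alpha> *\<^sub>R X)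
       + (K * spec_norm Y) * g"
proof -
  let ?M = "\<lambda>k. mat 1 - (\<eta>0 * real k powr (- \<alpha>)) *\<^sub>R A"
  let ?S = "Ssum ?M Y T"
  define s where "s = real T powr \<alpha>"
  define s' where "s' = real (Suc T) powr \<alpha>"
  define D where "D = ?S - s *\<^sub>R X"
  define M' where "M' = mat 1 - \<eta> *\<^sub>R A"
  have a0: "0 \<le> a" using an(1) sn_nonneg[of A] by linarith
  have eta0: "0 \<le> \<eta>" unfolding \<eta>_def using e0 by simp
  have bd: "norm (A *v x) \<le> a * norm x" for x
    using sn_app[of A x] an(1) by (meson mult_right_mono norm_ge_zero order_trans)
  have bdt: "norm (transpose A *v x) \<le> a * norm x" for x
    using sn_app[of "transpose A" x] an(2) by (meson mult_right_mono norm_ge_zero order_trans)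
  have MS: "?M (Suc T) = M'" unfolding M'_def \<eta>_def ..
  have "Ssum ?M Y (Suc T) = M' ** (?S + Y) ** transpose M'"
    using Ssum_Suc[of "\<lambda>k. \<eta>0 * real k powr (- \<alpha>)" A Y T] unfolding MS by simp
  also have "?S + Y = D + (s *\<^sub>R X + Y)" unfolding D_def by simp
  finally have "Ssum ?M Y (Suc T) - s' *\<^sub>R X = M' ** D ** transpose M' + (M' ** (s *\<^sub>R X + Y) ** transpose M' - s' *\<^sub>R X)"
    by (simp add: matrix_add_ldistrib mm_add_r)
  also have "M' ** (s *\<^sub>R X + Y) ** transpose M' - s' *\<^sub>R X
     = (s - s') *\<^sub>R X + (1 - \<eta> * s / \<eta>0) *\<^sub>R Y - \<eta> *\<^sub>R (A ** Y + Y ** transpose A)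
      + \<eta>^2 *\<^sub>R (A ** (s *\<^sub>R X + Y) ** transpose A)"
    unfolding M'_def using e0 by (intro R_ident[OF eq]) auto
  finally have Deq: "Ssum ?M Y (Suc T) - s' *\<^sub>R X = M' ** D ** transpose M' + ((s - s') *\<^sub>R X + (1 - \<eta> * s / \<eta>0) *\<^sub>R Y - \<eta> *\<^sub>R (A ** Y + Y ** transpose A)
      + \<eta>^2 *\<^sub>R (A ** (s *\<^sub>R X + Y) ** transpose A))" .
  have c1: "spec_norm (M' ** D ** transpose M') \<le> (1 - 2 * \<eta> * m + \<eta>^2 * a^2) * spec_norm D"
    unfolding M'_def by (rule contract[OF co bd bdt eta0 a0 ma])
  have c2: "spec_norm ((s - s') *\<^sub>R X + (1 - \<eta> * s / \<eta>0) *\<^sub>R Y - \<eta> *\<^sub>R (A ** Y + Y ** transpose A)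
      + \<eta>^2 *\<^sub>R (A ** (s *\<^sub>R X + Y) ** transpose A))
    \<le> \<bar>s - s'\<bar> * spec_norm X + \<bar>1 - \<eta> * s / \<eta>0\<bar> * spec_norm Y + \<eta> * (2 * a * spec_norm Y)
       + \<eta>^2 * (a * a * (\<bar>s\<bar> * spec_norm X + spec_norm Y))"
    by (rule R_bound[OF an eta0])
  have sc: "\<bar>s - s'\<bar> \<le> g \<and> \<bar>1 - \<eta> * s / \<eta>0\<bar> \<le> g \<and> \<eta> \<le> \<eta>0 * g \<and> \<eta>^2 * s \<le> \<eta>0^2 * g \<and> \<eta>^2 \<le> \<eta>0^2 * g"
  proof -
    have tc: "real T = 0 \<or> 1 \<le> real T" by auto
    have etaeq: "\<eta> = \<eta>0 * (real T + 1) powr (-\<alpha>)" unfolding \<eta>_def by (simp add: add.commute)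
    have s'eq: "s' = (real T + 1) powr \<alpha>" unfolding s'_def by (simp add: add.commute)
    show ?thesis using scal[OF al tc e0 etaeq] unfolding s'eq s_def g_def .
  qed
  have s0: "0 \<le> s" unfolding s_def by simp
  have nY0: "0 \<le> spec_norm Y" by (rule sn_nonneg)
  have nX0: "0 \<le> spec_norm X" by (rule sn_nonneg)
  have g0: "0 \<le> g" unfolding g_def by simp
  have "\<bar>s - s'\<bar> * spec_norm X + \<bar>1 - \<eta> * s / \<eta>0\<bar> * spec_norm Y + \<eta> * (2 * a * spec_norm Y)
       + \<eta>^2 * (a * a * (\<bar>s\<bar> * spec_norm X + spec_norm Y))
      = \<bar>s - s'\<bar> * spec_norm X + \<bar>1 - \<eta> * s / \<eta>0\<bar> * spec_norm Y + \<eta> * (2 * a * spec_norm Y)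
       + (\<eta>^2 * s) * (a^2 * spec_norm X) + \<eta>^2 * (a^2 * spec_norm Y)"
    using s0 by (simp add: power2_eq_square algebra_simps)
  also have "\<dots> \<le> g * spec_norm X + g * spec_norm Y + (\<eta>0 * g) * (2 * a * spec_norm Y)
       + (\<eta>0^2 * g) * (a^2 * spec_norm X) + (\<eta>0^2 * g) * (a^2 * spec_norm Y)"
    using sc nY0 nX0 a0 by (intro add_mono mult_right_mono mult_nonneg_nonneg) auto
  also have "\<dots> \<le> g * (cX * spec_norm Y) + g * spec_norm Y + (\<eta>0 * g) * (2 * a * spec_norm Y)
       + (\<eta>0^2 * g) * (a^2 * (cX * spec_norm Y)) + (\<eta>0^2 * g) * (a^2 * spec_norm Y)"
    using nX g0 e0 by (intro add_mono mult_left_mono order_refl mult_nonneg_nonneg) auto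
  also have "\<dots> = (K * spec_norm Y) * g" unfolding K_def by (simp add: algebra_simps power2_eq_square)
  finally have c3: "\<bar>s - s'\<bar> * spec_norm X + \<bar>1 - \<eta> * s / \<eta>0\<bar> * spec_norm Y + \<eta> * (2 * a * spec_norm Y)
       + \<eta>^2 * (a * a * (\<bar>s\<bar> * spec_norm X + spec_norm Y)) \<le> (K * spec_norm Y) * g" .
  have "spec_norm (Ssum ?M Y (Suc T) - s' *\<^sub>R X) \<le> spec_norm (M' ** D ** transpose M') + spec_norm ((s - s') *\<^sub>R X + (1 - \<eta> * s / \<eta>0) *\<^sub>R Y - \<eta> *\<^sub>R (A ** Y + Y ** transpose A)
      + \<eta>^2 *\<^sub>R (A ** (s *\<^sub>R X + Y) ** transpose A))" unfolding Deq by (rule sn_add)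
  also have "\<dots> \<le> (1 - 2 * \<eta> * m + \<eta>^2 * a^2) * spec_norm D + (K * spec_norm Y) * g"
    using c1 c2 c3 by linarith
  finally show ?thesis unfolding D_def s_def s'_def .
qed

lemma trace_le: "trace (F::real^'n^'n) \<le> real CARD('n) * spec_norm F"
proof -
  have "trace F \<le> (\<Sum>i\<in>UNIV. \<bar>F $ i $ i\<bar>)" unfolding trace_def by (intro sum_mono) auto
  also have "\<dots> \<le> (\<Sum>i\<in>(UNIV::'n set). spec_norm F)"
    by (intro sum_mono) (simp add: spec_norm_def matrix_component_le_onorm)
  finally show ?thesis by simp
qed

lemma nY_trace:
  fixes Y :: "real^'n^'n"
  assumes "pos_def Y"
  shows "spec_norm Y \<le> real CARD('n) * real CARD('n) * trace Y"
proof -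
  have Ys: "transpose Y = Y" using assms unfolding pos_def_def by simp
  have Yp: "0 \<le> x \<bullet> (Y *v x)" for x
  proof (cases "x = 0")
    case False then show ?thesis using assms unfolding pos_def_def by (simp add: less_imp_le)
  qed simp
  have diag: "Y $ i $ i \<le> trace Y" for i
    unfolding trace_def using psd_entry(1)[OF Ys Yp] by (intro member_le_sum) auto
  have "\<bar>Y $ i $ j\<bar> \<le> trace Y" for i j
  proof -
    have "\<bar>Y $ i $ j\<bar> \<le> (Y $ i $ i + Y $ j $ j) / 2" by (rule psd_entry(2)[OF Ys Yp])
    also have "\<dots> \<le> (trace Y + trace Y) / 2" using diag[of i] diag[of j] by simp
    finally show ?thesis by simp
  qed
  then show ?thesis unfolding spec_norm_def by (rule onorm_le_matrix_component)
qed

lemma q_eventually: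
  fixes \<eta>0 m a \<alpha> :: real
  assumes "0 < \<eta>0" "0 < m" "0 \<le> a" "0 < \<alpha>"
  shows "\<exists>T0. \<forall>T\<ge>T0. 1 - 2 * (\<eta>0 * real (Suc T) powr (-\<alpha>)) * m + (\<eta>0 * real (Suc T) powr (-\<alpha>))^2 * a^2
      \<le> 1 - (\<eta>0 * m) * (real T + 1) powr (- \<alpha>)"
proof -
  have "(\<lambda>T. real T powr (-\<alpha>)) \<longlonglongrightarrow> 0"
    using assms by (intro tendsto_neg_powr filterlim_real_sequentially) auto
  then have "(\<lambda>T. real (Suc T) powr (-\<alpha>)) \<longlonglongrightarrow> 0" by (rule LIMSEQ_Suc)
  moreover have "0 < m / (\<eta>0 * a^2 + 1)" using assms by (simp add: add_nonneg_pos)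
  ultimately have "eventually (\<lambda>T. real (Suc T) powr (-\<alpha>) < m / (\<eta>0 * a^2 + 1)) sequentially"
    by (rule order_tendstoD(2))
  then obtain T0 where T0: "\<And>T. T0 \<le> T \<Longrightarrow> real (Suc T) powr (-\<alpha>) < m / (\<eta>0 * a^2 + 1)"
    unfolding eventually_sequentially by blast
  have "1 - 2 * (\<eta>0 * real (Suc T) powr (-\<alpha>)) * m + (\<eta>0 * real (Suc T) powr (-\<alpha>))^2 * a^2
      \<le> 1 - (\<eta>0 * m) * (real T + 1) powr (- \<alpha>)" if "T0 \<le> T" for T
  proof -
    define u where "u = real (Suc T) powr (-\<alpha>)"
    have u0: "0 \<le> u" unfolding u_def by simp
    have pos: "0 < \<eta>0 * a^2 + 1" using assms by (simp add: add_nonneg_pos)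
    have "u < m / (\<eta>0 * a^2 + 1)" using T0[OF that] unfolding u_def .
    then have "u * (\<eta>0 * a^2 + 1) < m" using pos by (simp add: pos_less_divide_eq)
    then have "\<eta>0 * a^2 * u \<le> m" using u0 by (simp add: algebra_simps)
    then have "(\<eta>0 * u) * (\<eta>0 * a^2 * u) \<le> (\<eta>0 * u) * m"
      using assms u0 by (intro mult_left_mono) auto
    then have f: "(\<eta>0 * u)^2 * a^2 \<le> \<eta>0 * m * u" by (simp add: power2_eq_square mult_ac)
    have e1: "2 * (\<eta>0 * u) * m = 2 * (\<eta>0 * m * u)" by (simp add: mult_ac)
    have e2: "(real T + 1) powr (- \<alpha>) = u" unfolding u_def by (simp add: add.commute)
    have "1 - 2 * (\<eta>0 * u) * m + (\<eta>0 * u)^2 * a^2 \<le> 1 - (\<eta>0 * m) * u"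
      using f unfolding e1 by linarith
    then show ?thesis unfolding e2 u_def .
  qed
  then show ?thesis by blast
qed

theorem mainTheorem15:
  fixes P :: "'s::finite \<Rightarrow> 's \<Rightarrow> real" and \<mu> :: "'s \<Rightarrow> real"
    and \<phi> :: "'s \<Rightarrow> real^('d::finite)" and \<gamma> \<alpha> \<eta>0 :: real
  assumes "0 \<le> \<gamma>" "\<gamma> < 1"
    and "markov_kernel P" "stationary_dist P \<mu>"
    and "\<forall>s. norm (\<phi> s) \<le> 1"
    and "lambda_min (TD_Sigma \<mu> \<phi>) > 0"
    and "1/2 < \<alpha>" "\<alpha> < 1"
    and "0 < \<eta>0" "\<eta>0 < 1 / (2 * lambda_max (TD_Sigma \<mu> \<phi>))"
  shows "\<exists>C. \<forall>Y X :: 'd mat. \<forall>T::nat.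
           pos_def Y \<longrightarrow> pos_semidef X
           \<longrightarrow> \<eta>0 *\<^sub>R (TD_A P \<mu> \<gamma> \<phi> ** X + X ** transpose (TD_A P \<mu> \<gamma> \<phi>)) = Y
           \<longrightarrow> 1 \<le> T \<longrightarrow>
           (let A = TD_A P \<mu> \<gamma> \<phi>;
                \<eta> = (\<lambda>k::nat. \<eta>0 * real k powr (-\<alpha>));
                Q = (\<lambda>t. mat_prod_range (\<lambda>k. mat 1 - \<eta> k *\<^sub>R A) t T);
                F = (real T powr (-\<alpha>)) *\<^sub>R (\<Sum>t\<in>{1..T}. Q t ** Y ** transpose (Q t)) - X
            in spec_norm F \<le> C * real T powr (\<alpha> - 1) * spec_norm Y
             \<and> trace F \<le> C * real T powr (\<alpha> - 1) * trace Y)"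
proof -
  let ?A = "TD_A P \<mu> \<gamma> \<phi>"
  let ?M = "\<lambda>k. mat 1 - (\<eta>0 * real k powr (- \<alpha>)) *\<^sub>R ?A"
  have al: "1/2 < \<alpha>" "\<alpha> < 1" using assms by auto
  have e0: "0 < \<eta>0" using assms by auto
  obtain m where m: "m > 0" "\<And>x. m * norm x ^ 2 \<le> x \<bullet> (?A *v x)"
    using A_coercive[OF assms(1,2,3,4,6)] by blast
  define a where "a = max (max (spec_norm ?A) (spec_norm (transpose ?A))) m"
  have an: "spec_norm ?A \<le> a" "spec_norm (transpose ?A) \<le> a" and ma: "m \<le> a"
    unfolding a_def by auto
  have a0: "0 \<le> a" using ma m by simp
  define cX where "cX = real CARD('d) ^ 2 / (2 * \<eta>0 * m)"
  have cX0: "0 \<le> cX" unfolding cX_def using e0 m by simp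
  define K where "K = cX + 1 + 2 * a * \<eta>0 + \<eta>0^2 * a^2 * (cX + 1)"
  have K0: "0 \<le> K" unfolding K_def using cX0 a0 e0 by simp
  define q where "q T = 1 - 2 * (\<eta>0 * real (Suc T) powr (-\<alpha>)) * m + (\<eta>0 * real (Suc T) powr (-\<alpha>))^2 * a^2" for T
  define g where "g T = (if real T = 0 then 1 else real T powr (\<alpha> - 1))" for T :: nat
  have q0: "0 \<le> q T" for T unfolding q_def using e0 a0 ma by (intro q_nonneg) auto
  obtain T0 where ev: "\<And>T. T0 \<le> T \<Longrightarrow> q T \<le> 1 - (\<eta>0 * m) * (real T + 1) powr (- \<alpha>)"
    using q_eventually[OF e0 m(1) a0, of \<alpha>] al unfolding q_def by auto
  have gT: "g T = real T powr (\<alpha> - 1)" if "1 \<le> T" for T using that unfolding g_def by simp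
  have c: "0 < \<eta>0 * m" using e0 m by simp
  obtain B0 where B0: "\<forall>T\<ge>1. rec_nat 0 (\<lambda>T x. q T * x + g T) T \<le> B0 * real T powr (2 * \<alpha> - 1)"
    using w_bound[OF al c q0 ev gT] by blast
  define B where "B = max B0 0"
  have B: "\<forall>T\<ge>1. rec_nat 0 (\<lambda>T x. q T * x + g T) T \<le> B * real T powr (2 * \<alpha> - 1)"
  proof (intro allI impI)
    fix T :: nat assume "1 \<le> T"
    then have "rec_nat 0 (\<lambda>T x. q T * x + g T) T \<le> B0 * real T powr (2 * \<alpha> - 1)" using B0 by blast
    also have "\<dots> \<le> B * real T powr (2 * \<alpha> - 1)" unfolding B_def by (intro mult_right_mono) auto
    finally show "rec_nat 0 (\<lambda>T x. q T * x + g T) T \<le> B * real T powr (2 * \<alpha> - 1)" .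
  qed
  have B00: "0 \<le> B" unfolding B_def by simp
  define C where "C = (real CARD('d) ^ 3 + 1) * (K * B)"
  show ?thesis
  proof (rule exI[of _ C], intro allI impI)
    fix Y X :: "'d mat" and T :: nat
    assume Ypd: "pos_def Y" and Xp: "pos_semidef X"
      and eq: "\<eta>0 *\<^sub>R (?A ** X + X ** transpose ?A) = Y" and T1: "1 \<le> T"
    have nX: "spec_norm X \<le> cX * spec_norm Y"
      unfolding cX_def by (rule X_bound[OF m(1) m(2) e0 Xp eq])
    define dn where "dn T' = spec_norm (Ssum ?M Y T' - real T' powr \<alpha> *\<^sub>R X)" for T'
    have ds: "dn (Suc T') \<le> q T' * dn T' + (K * spec_norm Y) * g T'" for T'
      unfolding dn_def q_def g_def K_def
      by (rule D_step[OF m(2) an ma e0 eq nX al])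
    have d0: "dn 0 \<le> 0" unfolding dn_def by (simp add: Ssum_0 sn_zero)
    have KY: "0 \<le> K * spec_norm Y" using K0 sn_nonneg[of Y] by simp
    have "dn T \<le> (K * spec_norm Y) * rec_nat 0 (\<lambda>T x. q T * x + g T) T"
      by (rule d_le_w[OF d0 q0 KY ds])
    also have "\<dots> \<le> (K * spec_norm Y) * (B * real T powr (2 * \<alpha> - 1))"
      using B T1 KY by (intro mult_left_mono) auto
    finally have dT: "dn T \<le> (K * spec_norm Y) * (B * real T powr (2 * \<alpha> - 1))" .
    have Tp: "0 < real T" using T1 by simp
    define F where "F = (real T powr (-\<alpha>)) *\<^sub>R Ssum ?M Y T - X"
    have Feq: "F = (real T powr (-\<alpha>)) *\<^sub>R (Ssum ?M Y T - real T powr \<alpha> *\<^sub>R X)"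
      unfolding F_def using Tp by (simp add: scaleR_diff_right powr_minus)
    have pw: "real T powr (-\<alpha>) * real T powr (2 * \<alpha> - 1) = real T powr (\<alpha> - 1)"
      by (simp add: powr_add[symmetric])
    have "spec_norm F \<le> \<bar>real T powr (-\<alpha>)\<bar> * dn T" unfolding Feq dn_def by (rule sn_scale)
    also have "\<dots> \<le> real T powr (-\<alpha>) * ((K * spec_norm Y) * (B * real T powr (2 * \<alpha> - 1)))"
      using dT by (simp add: mult_left_mono)
    also have "\<dots> = (K * B) * real T powr (\<alpha> - 1) * spec_norm Y"
      using pw by (simp add: mult_ac)
    finally have sF: "spec_norm F \<le> (K * B) * real T powr (\<alpha> - 1) * spec_norm Y" .
    have KB0: "0 \<le> K * B" using K0 B00 by simp
    have s1: "spec_norm F \<le> C * real T powr (\<alpha> - 1) * spec_norm Y"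
    proof -
      have "K * B \<le> C" unfolding C_def using KB0 by (simp add: mult_le_cancel_right1 distrib_right)
      then have "(K * B) * real T powr (\<alpha> - 1) * spec_norm Y \<le> C * real T powr (\<alpha> - 1) * spec_norm Y"
        using sn_nonneg[of Y] by (intro mult_right_mono) auto
      then show ?thesis using sF by linarith
    qed
    have s2: "trace F \<le> C * real T powr (\<alpha> - 1) * trace Y"
    proof -
      have tY: "spec_norm Y \<le> real CARD('d) * real CARD('d) * trace Y" by (rule nY_trace[OF Ypd])
      have "trace F \<le> real CARD('d) * spec_norm F" by (rule trace_le)
      also have "\<dots> \<le> real CARD('d) * ((K * B) * real T powr (\<alpha> - 1) * spec_norm Y)"
        using sF by (simp add: mult_left_mono)
      also have "\<dots> \<le> real CARD('d) * ((K * B) * real T powr (\<alpha> - 1) * (real CARD('d) * real CARD('d) * trace Y))"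
        using tY KB0 K0 B00 by (intro mult_left_mono mult_nonneg_nonneg) auto
      also have "\<dots> = (real CARD('d) ^ 3 * (K * B)) * real T powr (\<alpha> - 1) * trace Y"
        by (simp add: power3_eq_cube mult_ac)
      also have "\<dots> \<le> C * real T powr (\<alpha> - 1) * trace Y"
      proof -
        have "0 \<le> (real CARD('d) * real CARD('d)) * trace Y" using tY sn_nonneg[of Y] by linarith
        moreover have "0 < real CARD('d) * real CARD('d)" by simp
        ultimately have tr0: "0 \<le> trace Y" using zero_le_mult_iff by (metis not_le)
        have "real CARD('d) ^ 3 * (K * B) \<le> C" unfolding C_def using KB0 by (simp add: distrib_right)
        then show ?thesis using tr0 by (intro mult_right_mono) auto
      qed
      finally show ?thesis .
    qed
    show "let A = ?A; \<eta> = (\<lambda>k::nat. \<eta>0 * real k powr (-\<alpha>));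
                Q = (\<lambda>t. mat_prod_range (\<lambda>k. mat 1 - \<eta> k *\<^sub>R A) t T);
                F = (real T powr (-\<alpha>)) *\<^sub>R (\<Sum>t\<in>{1..T}. Q t ** Y ** transpose (Q t)) - X
            in spec_norm F \<le> C * real T powr (\<alpha> - 1) * spec_norm Y
             \<and> trace F \<le> C * real T powr (\<alpha> - 1) * trace Y"
    proof -
      have Seq: "(\<Sum>t\<in>{1..T}. mat_prod_range ?M t T ** Y ** transpose (mat_prod_range ?M t T)) = Ssum ?M Y T"
        unfolding Ssum_def ..
      show ?thesis unfolding Let_def Seq F_def[symmetric] using s1 s2 by (rule conjI)
    qed
  qed
qed

end
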